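(* Let $y_1,\dots,y_n\in\mathbb{C}^m$, not all zero, and let $$\mathcal{F}=\Big\{X\in\mathbb{C}^{m\times m}:\ X \text{ Hermitian Toeplitz},\ X\succ 0,\ \tfrac1n\textstyle\sum_{i=1}^n y_i^HX^{-1}y_i\le 1\Big\},\qquad \tilde f(X)=\log\det X .$$ Starting from $X_0\in\mathcal{F}$, let $\{X_t\}$ be generated by one of the two following rules, used at every iteration (assuming the minimizers exist): (ATOM1) $X_{t+1}\in\arg\min_{X\in\mathcal{F}}\ \mathrm{Tr}(X_t^{-1}X)$; (ATOM2) $X_{t+1}\in\arg\min_{X\in\mathcal{F}}\ \|X-B_t\|_F^2$ with $B_t=X_t-\tfrac12 X_t^{-1}$. Then (i) $\tilde f(X_{t+1})\le \tilde f(X_t)$ for all $t$, i.e. the objective of problem $\min_{X\in\mathcal F}\tilde f(X)$ decreases monotonically along the iterations; and (ii) every positive definite cluster point $Z$ of $\{X_t\}$ is a stationary point of $\min_{X\in\mathcal{F}}\tilde f(X)$, i.e. $\tilde f'(Z;D)\ge 0$ for every direction $D$ such that $Z+D\in\mathcal{F}$.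
   Context: $\|\cdot\|_F$ is the Frobenius norm. The directional derivative is $\tilde f'(X;D)=\liminf_{\lambda\downarrow 0}\frac{\tilde f(X+\lambda D)-\tilde f(X)}{\lambda}$ (for $\tilde f=\log\det$ this equals $\mathrm{Tr}(X^{-1}D)$). The set $\mathcal{F}$ is convex. *)

theory Defs
  imports "HOL-Library.Extended_Real" "HOL-Library.Liminf_Limsup" "Jordan_Normal_Form.Matrix" "Jordan_Normal_Form.Determinant"
begin

definition herm :: "nat \<Rightarrow> complex mat \<Rightarrow> bool" where
  "herm m X \<longleftrightarrow> X \<in> carrier_mat m m \<and> (\<forall>i<m. \<forall>j<m. X $$ (i,j) = cnj (X $$ (j,i)))"

definition toeplitz :: "nat \<Rightarrow> complex mat \<Rightarrow> bool" where
  "toeplitz m X \<longleftrightarrow> X \<in> carrier_mat m m \<and>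
     (\<forall>i j. i + 1 < m \<longrightarrow> j + 1 < m \<longrightarrow> X $$ (i+1, j+1) = X $$ (i,j))"

definition qform :: "nat \<Rightarrow> complex mat \<Rightarrow> complex vec \<Rightarrow> complex" where
  "qform m X v = (\<Sum>i<m. \<Sum>j<m. cnj (v $ i) * X $$ (i,j) * v $ j)"

definition posdef :: "nat \<Rightarrow> complex mat \<Rightarrow> bool" where
  "posdef m X \<longleftrightarrow> herm m X \<and>
     (\<forall>v \<in> carrier_vec m. v \<noteq> 0\<^sub>v m \<longrightarrow> qform m X v \<in> \<real> \<and> Re (qform m X v) > 0)"

definition minv :: "nat \<Rightarrow> complex mat \<Rightarrow> complex mat" where
  "minv m X = (SOME B. B \<in> carrier_mat m m \<and> inverts_mat X B \<and> inverts_mat B X)"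

definition feasible :: "nat \<Rightarrow> nat \<Rightarrow> (nat \<Rightarrow> complex vec) \<Rightarrow> complex mat set" where
  "feasible m n y = {X. herm m X \<and> toeplitz m X \<and> posdef m X \<and>
      Re ((1 / of_nat n) * (\<Sum>i<n. qform m (minv m X) (y i))) \<le> 1}"

definition logdet :: "complex mat \<Rightarrow> real" where
  "logdet X = ln (Re (det X))"

definition frob2 :: "nat \<Rightarrow> complex mat \<Rightarrow> real" where
  "frob2 m A = (\<Sum>i<m. \<Sum>j<m. (cmod (A $$ (i,j)))^2)"

definition dir_deriv :: "(complex mat \<Rightarrow> real) \<Rightarrow> complex mat \<Rightarrow> complex mat \<Rightarrow> ereal" where
  "dir_deriv f X D = Liminf (at_right 0)
       (\<lambda>l::real. ereal ((f (X + complex_of_real l \<cdot>\<^sub>m D) - f X) / l))"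

definition mtrace :: "nat \<Rightarrow> complex mat \<Rightarrow> complex" where
  "mtrace m A = (\<Sum>i<m. A $$ (i,i))"

definition atom1_step :: "nat \<Rightarrow> nat \<Rightarrow> (nat \<Rightarrow> complex vec) \<Rightarrow> complex mat \<Rightarrow> complex mat \<Rightarrow> bool" where
  "atom1_step m n y Xt Xn \<longleftrightarrow> Xn \<in> feasible m n y \<and>
     (\<forall>Y \<in> feasible m n y. Re (mtrace m (minv m Xt * Xn)) \<le> Re (mtrace m (minv m Xt * Y)))"

definition atom2_step :: "nat \<Rightarrow> nat \<Rightarrow> (nat \<Rightarrow> complex vec) \<Rightarrow> complex mat \<Rightarrow> complex mat \<Rightarrow> bool" where
  "atom2_step m n y Xt Xn \<longleftrightarrow> Xn \<in> feasible m n y \<and>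
     (let B = Xt - (1/2 :: complex) \<cdot>\<^sub>m minv m Xt in
      \<forall>Y \<in> feasible m n y. frob2 m (Xn - B) \<le> frob2 m (Y - B))"

end

theory Submission
  imports Defs "Jordan_Normal_Form.Schur_Decomposition"
begin


lemma mult_entry:
  assumes "A \<in> carrier_mat m m" "B \<in> carrier_mat m m" "i < m" "j < m"
  shows "(A * B) $$ (i,j) = (\<Sum>k<m. A $$ (i,k) * B $$ (k,j))"
  using assms by (simp add: scalar_prod_def lessThan_atLeast0)

lemma mtrace_mult:
  assumes "A \<in> carrier_mat m m" "B \<in> carrier_mat m m"
  shows "mtrace m (A * B) = (\<Sum>i<m. \<Sum>j<m. A $$ (i,j) * B $$ (j,i))"
  unfolding mtrace_def by (intro sum.cong refl, rule mult_entry[OF assms]) auto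

lemma mtrace_comm:
  assumes "A \<in> carrier_mat m m" "B \<in> carrier_mat m m"
  shows "mtrace m (A * B) = mtrace m (B * A)"
  unfolding mtrace_mult[OF assms] mtrace_mult[OF assms(2,1)]
  by (subst sum.swap) (simp add: mult.commute)

lemma mtrace_one: "mtrace m (1\<^sub>m m) = of_nat m"
  unfolding mtrace_def by simp

lemma mult_vec_entry:
  assumes "A \<in> carrier_mat m m" "v \<in> carrier_vec m" "i < m"
  shows "(A *\<^sub>v v) $ i = (\<Sum>j<m. A $$ (i,j) * v $ j)"
  using assms by (simp add: scalar_prod_def lessThan_atLeast0)

lemma qform_alt:
  assumes "A \<in> carrier_mat m m" "v \<in> carrier_vec m"
  shows "qform m A v = (\<Sum>i<m. cnj (v $ i) * (A *\<^sub>v v) $ i)"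
  unfolding qform_def
  by (intro sum.cong refl, subst mult_vec_entry[OF assms]) (auto simp: sum_distrib_left mult.assoc)

lemma qform_eig:
  assumes "A \<in> carrier_mat m m" "M \<in> carrier_mat m m" "v \<in> carrier_vec m"
    and "A *\<^sub>v v = e \<cdot>\<^sub>v (M *\<^sub>v v)"
  shows "qform m A v = e * qform m M v"
proof -
  have "qform m A v = (\<Sum>i<m. cnj (v $ i) * (A *\<^sub>v v) $ i)" using qform_alt assms by blast
  also have "\<dots> = (\<Sum>i<m. e * (cnj (v $ i) * (M *\<^sub>v v) $ i))"
    using assms(1,2,4) by (auto intro!: sum.cong)
  also have "\<dots> = e * qform m M v" using qform_alt[OF assms(2,3)] by (simp add: sum_distrib_left)
  finally show ?thesis .
qed

lemma qform_one_pos: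
  assumes "v \<in> carrier_vec m" "v \<noteq> 0\<^sub>v m"
  shows "qform m (1\<^sub>m m) v \<in> \<real> \<and> Re (qform m (1\<^sub>m m) v) > 0"
proof -
  have e: "qform m (1\<^sub>m m) v = (\<Sum>i<m. cnj (v $ i) * v $ i)"
    using assms(1) by (subst qform_alt[of _ m]) auto
  have re: "Re (qform m (1\<^sub>m m) v) = (\<Sum>i<m. (cmod (v $ i))^2)"
    unfolding e Re_sum by (intro sum.cong refl) (simp add: cmod_power2, simp add: power2_eq_square)
  have im: "Im (qform m (1\<^sub>m m) v) = 0"
    unfolding e Im_sum by (intro sum.neutral) (simp add: algebra_simps)
  obtain i where i: "i < m" "v $ i \<noteq> 0" using assms by (metis eq_vecI carrier_vecD index_zero_vec)
  have "(\<Sum>i<m. (cmod (v $ i))^2) > 0"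
    by (rule sum_pos2[of _ i]) (use i in auto)
  then show ?thesis using re im complex_is_Real_iff by auto
qed

lemma posdef_carrier: "posdef m A \<Longrightarrow> A \<in> carrier_mat m m"
  unfolding posdef_def herm_def by auto

lemma posdef_det_nz:
  assumes "posdef m A" shows "det A \<noteq> 0"
proof
  assume "det A = 0"
  have A: "A \<in> carrier_mat m m" using assms posdef_carrier by auto
  then obtain v where v: "v \<in> carrier_vec m" "v \<noteq> 0\<^sub>v m" "A *\<^sub>v v = 0\<^sub>v m"
    using \<open>det A = 0\<close> det_0_iff_vec_prod_zero by blast
  have "qform m A v = 0" using qform_alt[OF A v(1)] v by auto
  with assms v show False unfolding posdef_def by auto
qed

lemma minv_char:
  assumes A: "A \<in> carrier_mat m m" and d: "det A \<noteq> 0"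
  shows "minv m A = (1 / det A) \<cdot>\<^sub>m adj_mat A"
    "minv m A \<in> carrier_mat m m" "A * minv m A = 1\<^sub>m m" "minv m A * A = 1\<^sub>m m"
proof -
  define B where "B = (1 / det A) \<cdot>\<^sub>m adj_mat A"
  have B: "B \<in> carrier_mat m m" using adj_mat[OF A] B_def by auto
  have AB: "A * B = 1\<^sub>m m" unfolding B_def using adj_mat[OF A] A d
    by (simp add: mult_smult_distrib[of _ m m _ m]) (intro eq_matI, auto)
  have BA: "B * A = 1\<^sub>m m" unfolding B_def using adj_mat[OF A] A d
    by (simp add: mult_smult_assoc_mat[of _ m m _ m]) (intro eq_matI, auto)
  have P: "B \<in> carrier_mat m m \<and> inverts_mat A B \<and> inverts_mat B A"
    using A B AB BA by (auto simp: inverts_mat_def)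
  define C where "C = minv m A"
  have C: "C \<in> carrier_mat m m \<and> inverts_mat A C \<and> inverts_mat C A"
    unfolding C_def minv_def by (rule someI[of _ B], rule P)
  have "C = C * (A * B)" using C AB by auto
  also have "\<dots> = (C * A) * B" using C A B by (simp add: assoc_mult_mat[of _ m m _ m _ m])
  also have "\<dots> = B" using C B A by (auto simp: inverts_mat_def)
  finally have CB: "C = B" .
  show "minv m A = (1 / det A) \<cdot>\<^sub>m adj_mat A" using CB C_def B_def by simp
  show "minv m A \<in> carrier_mat m m" "A * minv m A = 1\<^sub>m m" "minv m A * A = 1\<^sub>m m"
    using CB C_def B AB BA by auto
qed



lemma list_pos_real:
  assumes "\<forall>e\<in>set es. e \<in> \<real> \<and> Re e > 0"
  shows "prod_list es \<in> \<real> \<and> Re (prod_list es) > 0 \<and>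
         ln (Re (prod_list es)) \<le> Re (sum_list es) - real (length es)"
  using assms
proof (induction es)
  case Nil
  then show ?case by simp
next
  case (Cons e es)
  then have IH: "prod_list es \<in> \<real>" "Re (prod_list es) > 0"
     "ln (Re (prod_list es)) \<le> Re (sum_list es) - real (length es)"
    and e: "e \<in> \<real>" "Re e > 0" by auto
  have re: "Re (e * prod_list es) = Re e * Re (prod_list es)"
    using e(1) IH(1) by (auto elim!: Reals_cases)
  have "ln (Re e * Re (prod_list es)) = ln (Re e) + ln (Re (prod_list es))"
    using e IH by (simp add: ln_mult)
  also have "\<dots> \<le> (Re e - 1) + (Re (sum_list es) - real (length es))"
    using ln_le_minus_one[OF e(2)] IH(3) by linarith
  finally show ?case using e IH re by (auto intro: Reals_mult)
qed

lemma pos_eigs_det_trace: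
  fixes C :: "complex mat"
  assumes C: "C \<in> carrier_mat m m" and pe: "\<And>e. eigenvalue C e \<Longrightarrow> e \<in> \<real> \<and> Re e > 0"
  shows "det C \<in> \<real> \<and> Re (det C) > 0 \<and> ln (Re (det C)) \<le> Re (mtrace m C) - real m"
proof -
  obtain es where cp: "char_poly C = (\<Prod>a\<leftarrow>es. [:-a,1:])" "length es = m"
    using char_poly_factorized[OF C] by blast
  obtain B P Q where sd: "schur_decomposition C es = (B,P,Q)" by (cases "schur_decomposition C es") auto
  from schur_decomposition[OF C cp(1) sd] have sim: "similar_mat_wit C B P Q"
    and ut: "upper_triangular B" and dg: "diag_mat B = es" by auto
  note S = similar_mat_witD2[OF C sim]
  have dPQ: "det P * det Q = 1" using det_mult[OF S(6) S(7)] S(1) by simp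
  have "det C = det P * det B * det Q" using S det_mult[OF mult_carrier_mat[OF S(6) S(5)] S(7)] det_mult[OF S(6) S(5)] by simp
  also have "\<dots> = det B" using dPQ by (simp add: algebra_simps)
  also have "\<dots> = prod_list es" using det_upper_triangular[OF ut S(5)] dg by simp
  finally have dC: "det C = prod_list es" .
  have "mtrace m C = mtrace m (Q * (P * B))"
    unfolding S(3) by (rule mtrace_comm[OF mult_carrier_mat[OF S(6) S(5)] S(7)])
  also have "\<dots> = mtrace m B"
    unfolding assoc_mult_mat[OF S(7) S(6) S(5), symmetric] S(2) using S(5) by simp
  also have "\<dots> = sum_list es"
    unfolding mtrace_def dg[symmetric] diag_mat_def using S(5)
    by (simp add: sum_set_upt_conv_sum_list_nat[symmetric] lessThan_atLeast0)
  finally have tC: "mtrace m C = sum_list es" .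
  have "\<forall>e\<in>set es. e \<in> \<real> \<and> Re e > 0"
  proof
    fix e assume "e \<in> set es"
    then have "poly (char_poly C) e = 0"
      unfolding cp(1) by (auto simp: poly_prod_list prod_list_zero_iff)
    then show "e \<in> \<real> \<and> Re e > 0" using pe eigenvalue_root_char_poly[OF C] by blast
  qed
  from list_pos_real[OF this] show ?thesis unfolding dC tC cp(2) .
qed



lemma ratio_pos:
  fixes a b e :: complex
  assumes "a = e * b" "a \<in> \<real>" "Re a > 0" "b \<in> \<real>" "Re b > 0"
  shows "e \<in> \<real> \<and> Re e > 0"
proof -
  obtain ra rb where ab: "a = of_real ra" "b = of_real rb" using assms by (auto elim!: Reals_cases)
  have rb: "rb > 0" using assms(5) ab(2) by simp
  have ra: "ra > 0" using assms(3) ab(1) by simp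
  have "e = of_real (ra / rb)" using assms(1) ab rb by (simp add: field_simps)
  then show ?thesis using rb ra by simp
qed

lemma posdef_eig:
  assumes A: "posdef m A" and ev: "eigenvalue A e"
  shows "e \<in> \<real> \<and> Re e > 0"
proof -
  have Ac: "A \<in> carrier_mat m m" using A posdef_carrier by auto
  obtain v where v: "v \<in> carrier_vec m" "v \<noteq> 0\<^sub>v m" "A *\<^sub>v v = e \<cdot>\<^sub>v v"
    using ev Ac unfolding eigenvalue_def eigenvector_def by auto
  have "A *\<^sub>v v = e \<cdot>\<^sub>v (1\<^sub>m m *\<^sub>v v)" using v by simp
  from qform_eig[OF Ac _ v(1) this] have "qform m A v = e * qform m (1\<^sub>m m) v" by simp
  from ratio_pos[OF this] A v qform_one_pos[OF v(1,2)] show ?thesis unfolding posdef_def by auto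
qed

lemma posdef_det:
  assumes A: "posdef m A"
  shows "det A \<in> \<real> \<and> Re (det A) > 0"
  using pos_eigs_det_trace[OF posdef_carrier[OF A]] posdef_eig[OF A] by blast

lemma key_ineq:
  assumes A: "posdef m A" and B: "posdef m B"
  shows "ln (Re (det B)) - ln (Re (det A)) \<le> Re (mtrace m (minv m A * B)) - real m"
proof -
  have Ac: "A \<in> carrier_mat m m" and Bc: "B \<in> carrier_mat m m"
    using A B posdef_carrier by auto
  have dA: "det A \<noteq> 0" using posdef_det_nz[OF A] .
  note I = minv_char[OF Ac dA]
  define C where "C = minv m A * B"
  have Cc: "C \<in> carrier_mat m m" unfolding C_def using I(2) Bc by auto
  have eig: "e \<in> \<real> \<and> Re e > 0" if ev: "eigenvalue C e" for e
  proof -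
    obtain v where v: "v \<in> carrier_vec m" "v \<noteq> 0\<^sub>v m" "C *\<^sub>v v = e \<cdot>\<^sub>v v"
      using ev Cc unfolding eigenvalue_def eigenvector_def by auto
    have AC: "A * C = B" unfolding C_def
      using assoc_mult_mat[OF Ac I(2) Bc, symmetric] I(3) Bc by simp
    have "B *\<^sub>v v = (A * C) *\<^sub>v v" using AC by simp
    also have "\<dots> = A *\<^sub>v (C *\<^sub>v v)" using Ac Cc v by (simp add: assoc_mult_mat_vec)
    also have "\<dots> = e \<cdot>\<^sub>v (A *\<^sub>v v)" using v Ac by (simp add: mult_mat_vec)
    finally have "qform m B v = e * qform m A v" using qform_eig[OF Bc Ac v(1)] by blast
    from ratio_pos[OF this] A B v show ?thesis unfolding posdef_def by auto
  qed
  have dC: "det C \<in> \<real> \<and> Re (det C) > 0 \<and> ln (Re (det C)) \<le> Re (mtrace m C) - real m"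
    using pos_eigs_det_trace[OF Cc eig] by blast
  have "det (minv m A) * det A = 1" using det_mult[OF I(2) Ac] I(4) by simp
  then have "det C = det B / det A" unfolding C_def using det_mult[OF I(2) Bc] dA
    by (simp add: field_simps)
  moreover obtain a b where ab: "det A = of_real a" "det B = of_real b" "a > 0" "b > 0"
    using posdef_det[OF A] posdef_det[OF B] by (auto elim!: Reals_cases)
  ultimately have "Re (det C) = b / a" by simp
  then have "ln (Re (det C)) = ln b - ln a" using ab by (simp add: ln_div)
  then show ?thesis using dC ab unfolding C_def by simp
qed



definition mlim :: "nat \<Rightarrow> 'b filter \<Rightarrow> ('b \<Rightarrow> complex mat) \<Rightarrow> complex mat \<Rightarrow> bool" where
  "mlim n F M N \<longleftrightarrow> (\<forall>i<n. \<forall>j<n. ((\<lambda>k. M k $$ (i,j)) \<longlongrightarrow> N $$ (i,j)) F)"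

lemma det_tendsto:
  assumes M: "\<And>k. M k \<in> carrier_mat n n" and N: "N \<in> carrier_mat n n" and L: "mlim n F M N"
  shows "((\<lambda>k. det (M k)) \<longlongrightarrow> det N) F"
proof -
  have e: "(\<lambda>k. det (M k)) = (\<lambda>k. \<Sum>p\<in>{p. p permutes {0..<n}}. signof p * (\<Prod>i=0..<n. M k $$ (i, p i)))"
    using det_def'[OF M] by auto
  show ?thesis unfolding e det_def'[OF N]
  proof (intro tendsto_sum tendsto_mult tendsto_const tendsto_prod)
    fix p i assume p: "p \<in> {p. p permutes {0..<n}}" and i: "i \<in> {0..<n}"
    then have "p i < n" using permutes_in_image[of p "{0..<n}" i] by auto
    then show "((\<lambda>k. M k $$ (i, p i)) \<longlongrightarrow> N $$ (i, p i)) F" using L i unfolding mlim_def by auto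
  qed
qed

lemma minv_tendsto:
  assumes M: "\<And>k. M k \<in> carrier_mat m m" and N: "N \<in> carrier_mat m m" and L: "mlim m F M N"
    and d: "det N \<noteq> 0"
  shows "mlim m F (\<lambda>k. minv m (M k)) (minv m N)"
  unfolding mlim_def
proof (intro allI impI)
  fix i j assume ij: "i < m" "j < m"
  have dt: "((\<lambda>k. det (M k)) \<longlongrightarrow> det N) F" by (rule det_tendsto[OF M N L])
  have ev: "eventually (\<lambda>k. det (M k) \<noteq> 0) F" using tendsto_imp_eventually_ne[OF dt d] .
  have ent: "minv m A $$ (i,j) = (1 / det A) * ((-1)^(j+i) * det (mat_delete A j i))"
    if "A \<in> carrier_mat m m" "det A \<noteq> 0" for A
    using minv_char(1)[OF that] that ij by (simp add: adj_mat_def cofactor_def)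
  have md: "mat_delete A j i \<in> carrier_mat (m-1) (m-1)" if "A \<in> carrier_mat m m" for A
    using mat_delete_carrier[OF that] .
  have "mlim (m-1) F (\<lambda>k. mat_delete (M k) j i) (mat_delete N j i)"
    unfolding mlim_def
  proof (intro allI impI)
    fix a b assume ab: "a < m - 1" "b < m - 1"
    have e1: "mat_delete A j i $$ (a,b) = A $$ (if a < j then a else Suc a, if b < i then b else Suc b)"
      if "A \<in> carrier_mat m m" for A
      using that ab unfolding mat_delete_def by auto
    have lt: "(if a < j then a else Suc a) < m" "(if b < i then b else Suc b) < m" using ab by auto
    show "((\<lambda>k. mat_delete (M k) j i $$ (a, b)) \<longlongrightarrow> mat_delete N j i $$ (a, b)) F"
      unfolding e1[OF M] e1[OF N] using L lt unfolding mlim_def by blast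
  qed
  from det_tendsto[OF md[OF M] md[OF N] this]
  have "((\<lambda>k. (1 / det (M k)) * ((-1)^(j+i) * det (mat_delete (M k) j i))) \<longlongrightarrow>
         (1 / det N) * ((-1)^(j+i) * det (mat_delete N j i))) F"
    by (intro tendsto_mult tendsto_divide tendsto_const dt d)
  moreover have "eventually (\<lambda>k. (1 / det (M k)) * ((-1)^(j+i) * det (mat_delete (M k) j i))
        = minv m (M k) $$ (i,j)) F"
    using ev by eventually_elim (simp add: ent[OF M])
  ultimately show "((\<lambda>k. minv m (M k) $$ (i, j)) \<longlongrightarrow> minv m N $$ (i, j)) F"
    unfolding ent[OF N d] by (rule Lim_transform_eventually)
qed

lemma trace_tendsto:
  assumes A: "\<And>k. A k \<in> carrier_mat m m" "A' \<in> carrier_mat m m"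
    and B: "\<And>k. B k \<in> carrier_mat m m" "B' \<in> carrier_mat m m"
    and LA: "mlim m F A A'" and LB: "mlim m F B B'"
  shows "((\<lambda>k. mtrace m (A k * B k)) \<longlongrightarrow> mtrace m (A' * B')) F"
proof -
  have e: "(\<lambda>k. mtrace m (A k * B k)) = (\<lambda>k. \<Sum>i<m. \<Sum>j<m. A k $$ (i,j) * B k $$ (j,i))"
    using mtrace_mult[OF A(1) B(1)] by auto
  show ?thesis unfolding e mtrace_mult[OF A(2) B(2)]
    by (intro tendsto_sum tendsto_mult) (use LA LB in \<open>auto simp: mlim_def\<close>)
qed



lemma qform_lin:
  assumes "A \<in> carrier_mat m m" "D \<in> carrier_mat m m"
  shows "qform m (A + c \<cdot>\<^sub>m D) v = qform m A v + c * qform m D v"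
proof -
  have "qform m (A + c \<cdot>\<^sub>m D) v = (\<Sum>i<m. \<Sum>j<m. cnj (v $ i) * A $$ (i,j) * v $ j
        + c * (cnj (v $ i) * D $$ (i,j) * v $ j))"
    unfolding qform_def using assms by (intro sum.cong refl) (simp add: algebra_simps)
  then show ?thesis unfolding qform_def by (simp add: sum.distrib sum_distrib_left)
qed

lemma qform_add:
  assumes "A \<in> carrier_mat m m" "D \<in> carrier_mat m m"
  shows "qform m (A + D) v = qform m A v + qform m D v"
proof -
  have "qform m (A + D) v = (\<Sum>i<m. \<Sum>j<m. cnj (v $ i) * A $$ (i,j) * v $ j
        + cnj (v $ i) * D $$ (i,j) * v $ j)"
    unfolding qform_def using assms by (intro sum.cong refl) (simp add: algebra_simps)
  then show ?thesis unfolding qform_def by (simp add: sum.distrib)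
qed

lemma herm_seg:
  assumes A: "herm m A" and AD: "herm m (A + D)" and D: "D \<in> carrier_mat m m"
  shows "herm m (A + complex_of_real l \<cdot>\<^sub>m D)"
  unfolding herm_def
proof (intro conjI allI impI)
  show "A + complex_of_real l \<cdot>\<^sub>m D \<in> carrier_mat m m" using A D unfolding herm_def by auto
  fix i j assume ij: "i < m" "j < m"
  have Ac: "A \<in> carrier_mat m m" using A unfolding herm_def by auto
  have h1: "A $$ (i,j) = cnj (A $$ (j,i))" using A ij unfolding herm_def by blast
  have "(A + D) $$ (i,j) = cnj ((A + D) $$ (j,i))" using AD ij unfolding herm_def by blast
  then have "A $$ (i,j) + D $$ (i,j) = cnj (A $$ (j,i) + D $$ (j,i))" using ij Ac D by simp
  with h1 have "A $$ (i,j) = cnj (A $$ (j,i))" "A $$ (i,j) + D $$ (i,j) = cnj (A $$ (j,i) + D $$ (j,i))"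
    by auto
  then have "D $$ (i,j) = cnj (D $$ (j,i))" by simp
  then show "(A + complex_of_real l \<cdot>\<^sub>m D) $$ (i, j) = cnj ((A + complex_of_real l \<cdot>\<^sub>m D) $$ (j, i))"
    using ij Ac D \<open>A $$ (i,j) = cnj (A $$ (j,i))\<close> by simp
qed

lemma toeplitz_seg:
  assumes A: "toeplitz m A" and AD: "toeplitz m (A + D)" and D: "D \<in> carrier_mat m m"
  shows "toeplitz m (A + complex_of_real l \<cdot>\<^sub>m D)"
  unfolding toeplitz_def
proof (intro conjI allI impI)
  show "A + complex_of_real l \<cdot>\<^sub>m D \<in> carrier_mat m m" using A D unfolding toeplitz_def by auto
  fix i j assume ij: "i + 1 < m" "j + 1 < m"
  have Ac: "A \<in> carrier_mat m m" using A unfolding toeplitz_def by auto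
  have t1: "A $$ (i+1,j+1) = A $$ (i,j)" using A ij unfolding toeplitz_def by blast
  have "(A + D) $$ (i+1,j+1) = (A + D) $$ (i,j)" using AD ij unfolding toeplitz_def by blast
  then have "A $$ (i+1,j+1) + D $$ (i+1,j+1) = A $$ (i,j) + D $$ (i,j)" using ij Ac D
    by (simp del: One_nat_def add_Suc_right)
  then show "(A + complex_of_real l \<cdot>\<^sub>m D) $$ (i + 1, j + 1) = (A + complex_of_real l \<cdot>\<^sub>m D) $$ (i, j)"
    using ij Ac D t1 by (simp del: One_nat_def add_Suc_right)
qed

lemma posdef_seg:
  assumes A: "posdef m A" and AD: "posdef m (A + D)" and D: "D \<in> carrier_mat m m"
    and l: "0 \<le> l" "l \<le> 1"
  shows "posdef m (A + complex_of_real l \<cdot>\<^sub>m D)"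
  unfolding posdef_def
proof (intro conjI ballI impI)
  show "herm m (A + complex_of_real l \<cdot>\<^sub>m D)"
    using herm_seg A AD D unfolding posdef_def by blast
  fix v :: "complex vec" assume v: "v \<in> carrier_vec m" "v \<noteq> 0\<^sub>v m"
  have Ac: "A \<in> carrier_mat m m" using A posdef_carrier by auto
  have qa: "qform m A v \<in> \<real>" "Re (qform m A v) > 0" and qb: "qform m (A + D) v \<in> \<real>" "Re (qform m (A + D) v) > 0"
    using A AD v unfolding posdef_def by blast+
  define a where "a = Re (qform m A v)"
  define b where "b = Re (qform m (A + D) v)"
  have ab: "qform m A v = of_real a" "qform m (A + D) v = of_real b" "a > 0" "b > 0"
    using qa qb unfolding a_def b_def by (auto simp: of_real_Re)
  have "qform m D v = qform m (A + D) v - qform m A v" using qform_add[OF Ac D, of v] by simp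
  then have "qform m D v = of_real (b - a)" using ab by simp
  then have "qform m (A + complex_of_real l \<cdot>\<^sub>m D) v = of_real (a + l * (b - a))"
    using qform_lin[OF Ac D, of "complex_of_real l" v] ab by simp
  moreover have "a + l * (b - a) > 0"
  proof (cases "l = 0")
    case True then show ?thesis using ab by simp
  next
    case False then have "l * b > 0" using l ab by simp
    moreover have "(1 - l) * a \<ge> 0" using l ab by simp
    ultimately show ?thesis by (simp add: algebra_simps)
  qed
  ultimately show "qform m (A + complex_of_real l \<cdot>\<^sub>m D) v \<in> \<real>"
    "0 < Re (qform m (A + complex_of_real l \<cdot>\<^sub>m D) v)" by auto
qed



definition bf :: "nat \<Rightarrow> complex mat \<Rightarrow> complex vec \<Rightarrow> complex vec \<Rightarrow> complex" where
  "bf m X a b = (\<Sum>i<m. \<Sum>j<m. cnj (a $ i) * X $$ (i,j) * b $ j)"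

lemma bf_alt:
  assumes "X \<in> carrier_mat m m" "b \<in> carrier_vec m"
  shows "bf m X a b = (\<Sum>i<m. cnj (a $ i) * (X *\<^sub>v b) $ i)"
  unfolding bf_def
  by (intro sum.cong refl, subst mult_vec_entry[OF assms]) (auto simp: sum_distrib_left mult.assoc)

lemma bf_herm:
  assumes "herm m X"
  shows "bf m X a b = cnj (bf m X b a)"
proof -
  have "cnj (bf m X b a) = (\<Sum>i<m. \<Sum>j<m. b $ i * cnj (X $$ (i,j)) * cnj (a $ j))"
    unfolding bf_def by (simp add: cnj_sum)
  also have "\<dots> = (\<Sum>i<m. \<Sum>j<m. b $ i * X $$ (j,i) * cnj (a $ j))"
  proof (intro sum.cong refl)
    fix i j assume "i \<in> {..<m}" "j \<in> {..<m}"
    then have "X $$ (j,i) = cnj (X $$ (i,j))" using assms unfolding herm_def by blast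
    then show "b $ i * cnj (X $$ (i, j)) * cnj (a $ j) = b $ i * X $$ (j, i) * cnj (a $ j)" by simp
  qed
  also have "\<dots> = bf m X a b" unfolding bf_def by (subst sum.swap) (simp add: ac_simps)
  finally show ?thesis by simp
qed

lemma qform_bf: "qform m X v = bf m X v v" unfolding qform_def bf_def ..

lemma qform_diff:
  assumes "z \<in> carrier_vec m" "u \<in> carrier_vec m"
  shows "qform m X (z - u) = bf m X z z - bf m X z u - bf m X u z + bf m X u u"
proof -
  have "qform m X (z - u) = (\<Sum>i<m. \<Sum>j<m. cnj (z $ i) * X $$ (i,j) * z $ j
       - cnj (z $ i) * X $$ (i,j) * u $ j - cnj (u $ i) * X $$ (i,j) * z $ j
       + cnj (u $ i) * X $$ (i,j) * u $ j)"
    unfolding qform_def using assms by (intro sum.cong refl) (simp add: algebra_simps)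
  then show ?thesis unfolding bf_def by (simp add: sum.distrib sum_subtractf)
qed

lemma posdef_nonneg:
  assumes X: "posdef m X" and w: "w \<in> carrier_vec m"
  shows "Re (qform m X w) \<ge> 0"
proof (cases "w = 0\<^sub>v m")
  case True
  then show ?thesis unfolding qform_def by simp
next
  case False
  then show ?thesis using X w unfolding posdef_def by fastforce
qed

lemma vari:
  assumes X: "posdef m X" and y: "y \<in> carrier_vec m" and z: "z \<in> carrier_vec m"
  shows "2 * Re (\<Sum>i<m. cnj (z $ i) * y $ i) - Re (qform m X z) \<le> Re (qform m (minv m X) y)"
    and "2 * Re (\<Sum>i<m. cnj ((minv m X *\<^sub>v y) $ i) * y $ i) - Re (qform m X (minv m X *\<^sub>v y))
          = Re (qform m (minv m X) y)"
proof -
  have Xc: "X \<in> carrier_mat m m" using X posdef_carrier by auto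
  have hX: "herm m X" using X unfolding posdef_def by auto
  note I = minv_char[OF Xc posdef_det_nz[OF X]]
  define u where "u = minv m X *\<^sub>v y"
  have u: "u \<in> carrier_vec m" unfolding u_def using I(2) y by auto
  have Xu: "X *\<^sub>v u = y" unfolding u_def
    using assoc_mult_mat_vec[OF Xc I(2) y, symmetric] I(3) y by simp
  have bzu: "bf m X z u = (\<Sum>i<m. cnj (z $ i) * y $ i)" using bf_alt[OF Xc u] Xu by simp
  have buu: "bf m X u u = (\<Sum>i<m. cnj (u $ i) * y $ i)" using bf_alt[OF Xc u] Xu by simp
  have "qform m (minv m X) y = (\<Sum>i<m. cnj (y $ i) * u $ i)"
    unfolding u_def by (rule qform_alt[OF I(2) y])
  then have "bf m X u u = cnj (qform m (minv m X) y)" unfolding buu by (simp add: cnj_sum mult.commute)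
  then have "Re (qform m (minv m X) y) = Re (bf m X u u)" by simp
  note R = this
  have "Re (qform m X (z - u)) \<ge> 0" using posdef_nonneg[OF X] z u by auto
  then have "Re (bf m X z z) - Re (bf m X z u) - Re (bf m X u z) + Re (bf m X u u) \<ge> 0"
    unfolding qform_diff[OF z u] by simp
  moreover have "Re (bf m X u z) = Re (bf m X z u)" using bf_herm[OF hX, of u z] by simp
  ultimately show "2 * Re (\<Sum>i<m. cnj (z $ i) * y $ i) - Re (qform m X z) \<le> Re (qform m (minv m X) y)"
    using R unfolding bzu[symmetric] by (simp add: qform_bf)
  show "2 * Re (\<Sum>i<m. cnj ((minv m X *\<^sub>v y) $ i) * y $ i) - Re (qform m X (minv m X *\<^sub>v y))
          = Re (qform m (minv m X) y)"
    using R unfolding u_def[symmetric] buu[symmetric] by (simp add: qform_bf)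
qed



lemma Re_inv_nat: "Re ((1 / of_nat n) * (w::complex)) = Re w / real n"
  by (cases "n = 0") (simp_all add: Re_divide power2_eq_square)

lemma vec_seg:
  assumes A: "posdef m A" and AD: "posdef m (A + D)" and D: "D \<in> carrier_mat m m"
    and l: "0 \<le> l" "l \<le> 1" and yv: "yv \<in> carrier_vec m"
  shows "Re (qform m (minv m (A + complex_of_real l \<cdot>\<^sub>m D)) yv)
     \<le> (1 - l) * Re (qform m (minv m A) yv) + l * Re (qform m (minv m (A + D)) yv)"
proof -
  define W where "W = A + complex_of_real l \<cdot>\<^sub>m D"
  have W: "posdef m W" unfolding W_def by (rule posdef_seg[OF A AD D l])
  have Ac: "A \<in> carrier_mat m m" using A posdef_carrier by auto
  have Wc: "W \<in> carrier_mat m m" using W posdef_carrier by auto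
  note I = minv_char[OF Wc posdef_det_nz[OF W]]
  define u where "u = minv m W *\<^sub>v yv"
  have u: "u \<in> carrier_vec m" unfolding u_def using I(2) yv by auto
  define s where "s = 2 * Re (\<Sum>i<m. cnj (u $ i) * yv $ i)"
  have eW: "s - Re (qform m W u) = Re (qform m (minv m W) yv)"
    using vari(2)[OF W yv yv] unfolding s_def u_def by simp
  have eA: "s - Re (qform m A u) \<le> Re (qform m (minv m A) yv)"
    using vari(1)[OF A yv u] unfolding s_def by simp
  have eAD: "s - Re (qform m (A + D) u) \<le> Re (qform m (minv m (A + D)) yv)"
    using vari(1)[OF AD yv u] unfolding s_def by simp
  have qD: "qform m D u = qform m (A + D) u - qform m A u" using qform_add[OF Ac D, of u] by simp
  have qW: "Re (qform m W u) = Re (qform m A u) + l * (Re (qform m (A + D) u) - Re (qform m A u))"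
    unfolding W_def qform_lin[OF Ac D] qD by simp
  have "s - Re (qform m W u) = (1 - l) * (s - Re (qform m A u)) + l * (s - Re (qform m (A + D) u))"
    unfolding qW by (simp add: algebra_simps)
  also have "\<dots> \<le> (1 - l) * Re (qform m (minv m A) yv) + l * Re (qform m (minv m (A + D)) yv)"
    by (intro add_mono mult_left_mono eA eAD) (use l in auto)
  finally show ?thesis using eW unfolding W_def by simp
qed

lemma feasible_seg:
  assumes ydim: "\<forall>i<n. y i \<in> carrier_vec m" and A: "A \<in> feasible m n y"
    and AD: "A + D \<in> feasible m n y" and D: "D \<in> carrier_mat m m" and l: "0 \<le> l" "l \<le> 1"
  shows "A + complex_of_real l \<cdot>\<^sub>m D \<in> feasible m n y"
proof -
  have hA: "herm m A" "toeplitz m A" "posdef m A"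
    and cA: "(\<Sum>i<n. Re (qform m (minv m A) (y i))) / real n \<le> 1"
    using A unfolding feasible_def by (auto simp: Re_inv_nat Re_sum)
  have hAD: "herm m (A + D)" "toeplitz m (A + D)" "posdef m (A + D)"
    and cAD: "(\<Sum>i<n. Re (qform m (minv m (A + D)) (y i))) / real n \<le> 1"
    using AD unfolding feasible_def by (auto simp: Re_inv_nat Re_sum)
  let ?W = "A + complex_of_real l \<cdot>\<^sub>m D"
  have "(\<Sum>i<n. Re (qform m (minv m ?W) (y i)))
     \<le> (\<Sum>i<n. (1 - l) * Re (qform m (minv m A) (y i)) + l * Re (qform m (minv m (A + D)) (y i)))"
    by (intro sum_mono vec_seg[OF hA(3) hAD(3) D l]) (use ydim in auto)
  also have "\<dots> = (1 - l) * (\<Sum>i<n. Re (qform m (minv m A) (y i)))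
        + l * (\<Sum>i<n. Re (qform m (minv m (A + D)) (y i)))"
    by (simp add: sum.distrib sum_distrib_left)
  finally have "(\<Sum>i<n. Re (qform m (minv m ?W) (y i))) / real n
     \<le> ((1 - l) * (\<Sum>i<n. Re (qform m (minv m A) (y i)))
        + l * (\<Sum>i<n. Re (qform m (minv m (A + D)) (y i)))) / real n"
    by (rule divide_right_mono) simp
  also have "\<dots> = (1 - l) * ((\<Sum>i<n. Re (qform m (minv m A) (y i))) / real n)
        + l * ((\<Sum>i<n. Re (qform m (minv m (A + D)) (y i))) / real n)"
    by (simp add: add_divide_distrib)
  also have "\<dots> \<le> (1 - l) * 1 + l * 1"
    by (intro add_mono mult_left_mono cA cAD) (use l in auto)
  finally have c: "(\<Sum>i<n. Re (qform m (minv m ?W) (y i))) / real n \<le> 1" by simp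
  show ?thesis unfolding feasible_def
    using herm_seg[OF hA(1) hAD(1) D] toeplitz_seg[OF hA(2) hAD(2) D]
      posdef_seg[OF hA(3) hAD(3) D l] c by (auto simp: Re_inv_nat Re_sum)
qed



lemma cmod_sq_add: "(cmod (a + b))^2 = (cmod a)^2 + 2 * Re (cnj a * b) + (cmod b)^2"
  by (simp add: cmod_power2, simp add: power2_eq_square algebra_simps)

lemma re_l: "Re (cnj e * (complex_of_real l * v)) = l * Re (cnj e * v)"
  by (simp add: algebra_simps)

lemma cmod_l: "(cmod (complex_of_real l * v))^2 = l^2 * (cmod v)^2"
  by (simp add: norm_mult power_mult_distrib)

lemma feas_posdef: "X \<in> feasible m n y \<Longrightarrow> posdef m X"
  unfolding feasible_def by auto

lemma feas_carrier: "X \<in> feasible m n y \<Longrightarrow> X \<in> carrier_mat m m"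
  using feas_posdef posdef_carrier by blast

lemma feas_herm_entry: "X \<in> feasible m n y \<Longrightarrow> i < m \<Longrightarrow> j < m \<Longrightarrow> X $$ (i,j) = cnj (X $$ (j,i))"
  unfolding feasible_def herm_def by blast

lemma mtrace_inv_self:
  assumes "posdef m A" shows "mtrace m (minv m A * A) = of_nat m"
  using minv_char(4)[OF posdef_carrier[OF assms] posdef_det_nz[OF assms]] by (simp add: mtrace_one)

lemma step1:
  assumes X0: "X0 \<in> feasible m n y" and st: "atom1_step m n y X0 X1" and Y: "Y \<in> feasible m n y"
  shows "logdet X1 - logdet X0 \<le> Re (mtrace m (minv m X0 * Y)) - real m"
proof -
  have X1: "X1 \<in> feasible m n y" "Re (mtrace m (minv m X0 * X1)) \<le> Re (mtrace m (minv m X0 * Y))"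
    using st Y unfolding atom1_step_def by auto
  from key_ineq[OF feas_posdef[OF X0] feas_posdef[OF X1(1)]] X1(2)
  show ?thesis unfolding logdet_def by linarith
qed

lemma step1_dec:
  assumes X0: "X0 \<in> feasible m n y" and st: "atom1_step m n y X0 X1"
  shows "logdet X1 \<le> logdet X0"
  using step1[OF X0 st X0] mtrace_inv_self[OF feas_posdef[OF X0]] by simp

lemma step2:
  assumes X0: "X0 \<in> feasible m n y" and st: "atom2_step m n y X0 X1"
  shows "logdet X1 - logdet X0 \<le> - (\<Sum>i<m. \<Sum>j<m. (cmod (X1 $$ (i,j) - X0 $$ (i,j)))^2)"
proof -
  have X1: "X1 \<in> feasible m n y" using st unfolding atom2_step_def by auto
  define P where "P = minv m X0"
  define B where "B = X0 - (1/2 :: complex) \<cdot>\<^sub>m P"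
  have c0: "X0 \<in> carrier_mat m m" and c1: "X1 \<in> carrier_mat m m" using X0 X1 feas_carrier by auto
  have Pc: "P \<in> carrier_mat m m" unfolding P_def
    using minv_char(2)[OF c0 posdef_det_nz[OF feas_posdef[OF X0]]] .
  have fr: "frob2 m (X1 - B) \<le> frob2 m (X0 - B)"
    using st X0 unfolding atom2_step_def Let_def B_def P_def by auto
  define d where "d = (\<lambda>i j. X1 $$ (i,j) - X0 $$ (i,j))"
  have e1: "frob2 m (X1 - B) = (\<Sum>i<m. \<Sum>j<m. (cmod (d i j))^2 + Re (cnj (d i j) * P $$ (i,j))
        + (cmod (P $$ (i,j) / 2))^2)"
    unfolding frob2_def
  proof (intro sum.cong refl)
    fix i j assume ij: "i \<in> {..<m}" "j \<in> {..<m}"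
    have e: "(X1 - B) $$ (i,j) = d i j + P $$ (i,j) / 2" unfolding B_def d_def using ij c0 c1 Pc by simp
    show "(cmod ((X1 - B) $$ (i, j)))\<^sup>2 = (cmod (d i j))\<^sup>2 + Re (cnj (d i j) * P $$ (i, j))
        + (cmod (P $$ (i, j) / 2))\<^sup>2" unfolding e cmod_sq_add by simp
  qed
  have e0: "frob2 m (X0 - B) = (\<Sum>i<m. \<Sum>j<m. (cmod (P $$ (i,j) / 2))^2)"
    unfolding frob2_def B_def using c0 Pc by (intro sum.cong refl) simp
  have S: "(\<Sum>i<m. \<Sum>j<m. (cmod (d i j))^2) + Re (\<Sum>i<m. \<Sum>j<m. cnj (d i j) * P $$ (i,j)) \<le> 0"
    using fr unfolding e1 e0 by (simp add: sum.distrib Re_sum)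
  have "(\<Sum>i<m. \<Sum>j<m. cnj (d i j) * P $$ (i,j))
      = (\<Sum>i<m. \<Sum>j<m. P $$ (i,j) * X1 $$ (j,i)) - (\<Sum>i<m. \<Sum>j<m. P $$ (i,j) * X0 $$ (j,i))"
    unfolding sum_subtractf[symmetric]
  proof (intro sum.cong refl)
    fix i j assume ij: "i \<in> {..<m}" "j \<in> {..<m}"
    have "cnj (d i j) = X1 $$ (j,i) - X0 $$ (j,i)"
      unfolding d_def using feas_herm_entry[OF X0, of j i] feas_herm_entry[OF X1, of j i] ij by simp
    then show "cnj (d i j) * P $$ (i, j) = P $$ (i, j) * X1 $$ (j, i) - P $$ (i, j) * X0 $$ (j, i)"
      by (simp only: right_diff_distrib mult.commute)
  qed
  also have "\<dots> = mtrace m (P * X1) - of_nat m"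
  proof -
    have "mtrace m (P * X0) = of_nat m" unfolding P_def by (rule mtrace_inv_self[OF feas_posdef[OF X0]])
    then show ?thesis using mtrace_mult[OF Pc c1] mtrace_mult[OF Pc c0] by simp
  qed
  finally have T: "Re (mtrace m (P * X1)) - real m = Re (\<Sum>i<m. \<Sum>j<m. cnj (d i j) * P $$ (i,j))" by simp
  from key_ineq[OF feas_posdef[OF X0] feas_posdef[OF X1]]
  have "logdet X1 - logdet X0 \<le> Re (mtrace m (P * X1)) - real m" unfolding logdet_def P_def .
  then show ?thesis using S T unfolding d_def by linarith
qed

lemma step2_vi:
  assumes ydim: "\<forall>i<n. y i \<in> carrier_vec m"
    and X1: "X1 \<in> feasible m n y" and Y: "Y \<in> feasible m n y" and Bc: "B \<in> carrier_mat m m"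
    and opt: "\<forall>W\<in>feasible m n y. frob2 m (X1 - B) \<le> frob2 m (W - B)"
  shows "Re (\<Sum>i<m. \<Sum>j<m. cnj (X1 $$ (i,j) - B $$ (i,j)) * (Y $$ (i,j) - X1 $$ (i,j))) \<ge> 0"
proof (rule ccontr)
  define a where "a = Re (\<Sum>i<m. \<Sum>j<m. cnj (X1 $$ (i,j) - B $$ (i,j)) * (Y $$ (i,j) - X1 $$ (i,j)))"
  define b where "b = (\<Sum>i<m. \<Sum>j<m. (cmod (Y $$ (i,j) - X1 $$ (i,j)))^2)"
  assume "\<not> ?thesis"
  then have a: "a < 0" unfolding a_def by simp
  have b: "b \<ge> 0" unfolding b_def by (intro sum_nonneg) auto
  have c1: "X1 \<in> carrier_mat m m" and cY: "Y \<in> carrier_mat m m" using X1 Y feas_carrier by auto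
  define D where "D = Y - X1"
  have Dc: "D \<in> carrier_mat m m" unfolding D_def using cY c1 by auto
  have XD: "X1 + D = Y" unfolding D_def using c1 cY by (intro eq_matI) auto
  have ineq: "0 \<le> 2 * l * a + l^2 * b" if l: "0 \<le> l" "l \<le> 1" for l
  proof -
    have W: "X1 + complex_of_real l \<cdot>\<^sub>m D \<in> feasible m n y"
      by (rule feasible_seg[OF ydim X1 _ Dc l]) (simp add: XD Y)
    have "frob2 m (X1 + complex_of_real l \<cdot>\<^sub>m D - B) = (\<Sum>i<m. \<Sum>j<m.
         (cmod (X1 $$ (i,j) - B $$ (i,j)))^2
         + 2 * l * Re (cnj (X1 $$ (i,j) - B $$ (i,j)) * (Y $$ (i,j) - X1 $$ (i,j)))
         + l^2 * (cmod (Y $$ (i,j) - X1 $$ (i,j)))^2)"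
      unfolding frob2_def
    proof (intro sum.cong refl)
      fix i j assume ij: "i \<in> {..<m}" "j \<in> {..<m}"
      have e: "(X1 + complex_of_real l \<cdot>\<^sub>m D - B) $$ (i,j)
          = (X1 $$ (i,j) - B $$ (i,j)) + complex_of_real l * (Y $$ (i,j) - X1 $$ (i,j))"
        unfolding D_def using ij c1 cY Bc by simp
      show "(cmod ((X1 + complex_of_real l \<cdot>\<^sub>m D - B) $$ (i, j)))\<^sup>2 =
         (cmod (X1 $$ (i,j) - B $$ (i,j)))^2
         + 2 * l * Re (cnj (X1 $$ (i,j) - B $$ (i,j)) * (Y $$ (i,j) - X1 $$ (i,j)))
         + l^2 * (cmod (Y $$ (i,j) - X1 $$ (i,j)))^2"
        unfolding e cmod_sq_add re_l cmod_l by simp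
    qed
    also have "\<dots> = frob2 m (X1 - B) + 2 * l * a + l^2 * b"
      unfolding a_def b_def frob2_def using c1 Bc
      by (simp add: sum.distrib sum_distrib_left Re_sum)
    finally have "frob2 m (X1 + complex_of_real l \<cdot>\<^sub>m D - B) = frob2 m (X1 - B) + 2 * l * a + l^2 * b" .
    with opt W show ?thesis by fastforce
  qed
  define l where "l = min 1 (- a / (b + 1))"
  have "- a / (b + 1) > 0" using a b by (intro divide_pos_pos) auto
  then have l0: "0 < l" "l \<le> 1" unfolding l_def by auto
  have "l * b \<le> (- a / (b + 1)) * b" unfolding l_def using b by (intro mult_right_mono) auto
  also have "\<dots> \<le> - a" using a b by (simp add: field_simps)
  finally have lb: "l * b \<le> - a" .
  have "0 \<le> l * (2 * a + l * b)" using ineq[OF less_imp_le[OF l0(1)] l0(2)]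
    by (simp add: power2_eq_square algebra_simps)
  then have "0 \<le> 2 * a + l * b" using l0 by (simp add: zero_le_mult_iff)
  with lb a show False by linarith
qed



lemma mlim_const: "mlim m F (\<lambda>k. A) A" unfolding mlim_def by simp

lemma trace_tendsto_ev:
  assumes A: "eventually (\<lambda>k. A k \<in> carrier_mat m m) F" "A' \<in> carrier_mat m m"
    and B: "\<And>k. B k \<in> carrier_mat m m" "B' \<in> carrier_mat m m"
    and LA: "mlim m F A A'" and LB: "mlim m F B B'"
  shows "((\<lambda>k. mtrace m (A k * B k)) \<longlongrightarrow> mtrace m (A' * B')) F"
proof -
  have e: "eventually (\<lambda>k. (\<Sum>i<m. \<Sum>j<m. A k $$ (i,j) * B k $$ (j,i)) = mtrace m (A k * B k)) F"
    using A(1) by eventually_elim (use mtrace_mult B(1) in auto)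
  have "((\<lambda>k. \<Sum>i<m. \<Sum>j<m. A k $$ (i,j) * B k $$ (j,i)) \<longlongrightarrow> mtrace m (A' * B')) F"
    unfolding mtrace_mult[OF A(2) B(2)]
    by (intro tendsto_sum tendsto_mult) (use LA LB in \<open>auto simp: mlim_def\<close>)
  then show ?thesis by (rule Lim_transform_eventually[OF _ e])
qed

lemma dd_lemma:
  assumes Z: "posdef m Z" and ZD: "posdef m (Z + D)" and Dc: "D \<in> carrier_mat m m"
    and c: "Re (mtrace m (minv m Z * D)) \<ge> 0"
  shows "dir_deriv logdet Z D \<ge> 0"
proof -
  have Zc: "Z \<in> carrier_mat m m" using Z posdef_carrier by auto
  have dZ: "det Z \<noteq> 0" using posdef_det_nz[OF Z] .
  define W where "W l = Z + complex_of_real l \<cdot>\<^sub>m D" for l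
  have Wc: "\<And>l. W l \<in> carrier_mat m m" unfolding W_def using Zc Dc by auto
  have bound: "Re (mtrace m (minv m (W l) * D)) \<le> (logdet (W l) - logdet Z) / l"
    if l: "0 < l" "l \<le> 1" for l
  proof -
    have Wp: "posdef m (W l)" unfolding W_def using posdef_seg[OF Z ZD Dc] l by auto
    have k: "ln (Re (det Z)) - ln (Re (det (W l))) \<le> Re (mtrace m (minv m (W l) * Z)) - real m"
      by (rule key_ineq[OF Wp Z])
    have Qc: "minv m (W l) \<in> carrier_mat m m" using minv_char(2)[OF Wc posdef_det_nz[OF Wp]] .
    have "mtrace m (minv m (W l) * Z) = mtrace m (minv m (W l) * W l) - of_real l * mtrace m (minv m (W l) * D)"
    proof -
      have "(\<Sum>i<m. \<Sum>j<m. minv m (W l) $$ (i,j) * Z $$ (j,i))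
          = (\<Sum>i<m. \<Sum>j<m. minv m (W l) $$ (i,j) * W l $$ (j,i) - of_real l * (minv m (W l) $$ (i,j) * D $$ (j,i)))"
        by (intro sum.cong refl) (use Zc Dc in \<open>simp add: W_def algebra_simps\<close>)
      then show ?thesis using mtrace_mult[OF Qc Zc] mtrace_mult[OF Qc Wc] mtrace_mult[OF Qc Dc]
        by (simp add: sum_subtractf sum_distrib_left)
    qed
    then have "Re (mtrace m (minv m (W l) * Z)) = real m - l * Re (mtrace m (minv m (W l) * D))"
      using mtrace_inv_self[OF Wp] by simp
    with k have "l * Re (mtrace m (minv m (W l) * D)) \<le> logdet (W l) - logdet Z"
      unfolding logdet_def by linarith
    then show ?thesis using l by (simp add: pos_le_divide_eq mult.commute)
  qed
  have MLw: "mlim m (at_right 0) W Z" unfolding mlim_def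
  proof (intro allI impI)
    fix i j assume ij: "i < m" "j < m"
    have "((\<lambda>l. Z $$ (i,j) + complex_of_real l * D $$ (i,j)) \<longlongrightarrow> Z $$ (i,j) + complex_of_real 0 * D $$ (i,j)) (at_right 0)"
      by (intro tendsto_intros)
    then show "((\<lambda>l. W l $$ (i, j)) \<longlongrightarrow> Z $$ (i, j)) (at_right 0)"
      unfolding W_def using ij Zc Dc by simp
  qed
  have evc: "eventually (\<lambda>l. minv m (W l) \<in> carrier_mat m m) (at_right 0)"
    unfolding eventually_at_right_field
  proof (intro exI[of _ 1] conjI allI impI)
    fix l :: real assume l: "0 < l" "l < 1"
    have Wp: "posdef m (W l)" unfolding W_def using posdef_seg[OF Z ZD Dc] l by auto
    show "minv m (W l) \<in> carrier_mat m m" using minv_char(2)[OF Wc posdef_det_nz[OF Wp]] .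
  qed simp
  have lim: "((\<lambda>l. Re (mtrace m (minv m (W l) * D))) \<longlongrightarrow> Re (mtrace m (minv m Z * D))) (at_right 0)"
    by (intro tendsto_Re trace_tendsto_ev[OF evc _ _ Dc minv_tendsto[OF Wc Zc MLw dZ] mlim_const])
       (use minv_char(2)[OF Zc dZ] Dc in auto)
  have "(\<lambda>l. Re (mtrace m (minv m (W l) * D))) = (\<lambda>l. Re (mtrace m (minv m (W l) * D)))" ..
  have ev: "eventually (\<lambda>l. ereal (Re (mtrace m (minv m (W l) * D))) \<le> ereal ((logdet (W l) - logdet Z) / l)) (at_right 0)"
    unfolding eventually_at_right_field
    by (rule exI[of _ 1]) (auto intro: bound)
  have "ereal (Re (mtrace m (minv m Z * D))) = Liminf (at_right 0) (\<lambda>l. ereal (Re (mtrace m (minv m (W l) * D))))"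
    by (rule lim_imp_Liminf[symmetric]) (use lim in \<open>auto simp: lim_ereal\<close>)
  also have "\<dots> \<le> Liminf (at_right 0) (\<lambda>l. ereal ((logdet (W l) - logdet Z) / l))"
    by (rule Liminf_mono[OF ev])
  also have "\<dots> = dir_deriv logdet Z D" unfolding dir_deriv_def W_def ..
  finally show ?thesis using c by (simp add: order_trans[rotated])
qed



lemma entry_le_frob:
  fixes f :: "nat \<Rightarrow> nat \<Rightarrow> real"
  assumes "i < m" "j < m"
  shows "(f i j :: real)^2 \<le> (\<Sum>i<m. \<Sum>j<m. (f i j)^2)"
proof -
  have "(f i j)^2 \<le> (\<Sum>j<m. (f i j)^2)" by (rule member_le_sum) (use assms in auto)
  also have "\<dots> \<le> (\<Sum>i<m. \<Sum>j<m. (f i j)^2)"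
    by (rule member_le_sum[where f = "\<lambda>i. \<Sum>j<m. (f i j)^2"]) (use assms in \<open>auto intro: sum_nonneg\<close>)
  finally show ?thesis .
qed

theorem lemma3:
  fixes m n :: nat and y :: "nat \<Rightarrow> complex vec" and X :: "nat \<Rightarrow> complex mat"
  assumes ydim: "\<forall>i<n. y i \<in> carrier_vec m"
    and ynz: "\<exists>i<n. y i \<noteq> 0\<^sub>v m"
    and X0: "X 0 \<in> feasible m n y"
    and iter: "(\<forall>t. atom1_step m n y (X t) (X (Suc t))) \<or> (\<forall>t. atom2_step m n y (X t) (X (Suc t)))"
  shows "(\<forall>t. logdet (X (Suc t)) \<le> logdet (X t)) \<and>
         (\<forall>Z r. Z \<in> carrier_mat m m \<longrightarrow> posdef m Z \<longrightarrow> strict_mono r \<longrightarrow>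
            (\<forall>i<m. \<forall>j<m. (\<lambda>k. X (r k) $$ (i,j)) \<longlonglongrightarrow> Z $$ (i,j)) \<longrightarrow>
            (\<forall>D \<in> carrier_mat m m. Z + D \<in> feasible m n y \<longrightarrow> dir_deriv logdet Z D \<ge> 0))"
proof -
  have Xall: "X t \<in> feasible m n y" for t
  proof (induction t)
    case 0 show ?case using X0 .
  next
    case (Suc t) show ?case using iter unfolding atom1_step_def atom2_step_def Let_def by blast
  qed
  have Xc: "X t \<in> carrier_mat m m" for t using feas_carrier[OF Xall] .
  have Xp: "posdef m (X t)" for t using feas_posdef[OF Xall] .
  define fr where "fr t = (\<Sum>i<m. \<Sum>j<m. (cmod (X (Suc t) $$ (i,j) - X t $$ (i,j)))^2)" for t
  have dec: "\<forall>t. logdet (X (Suc t)) \<le> logdet (X t)"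
    using iter
  proof (elim disjE)
    assume a: "\<forall>t. atom1_step m n y (X t) (X (Suc t))"
    show ?thesis using step1_dec[OF Xall] a by blast
  next
    assume a: "\<forall>t. atom2_step m n y (X t) (X (Suc t))"
    show ?thesis
    proof
      fix t
      have "fr t \<ge> 0" unfolding fr_def by (intro sum_nonneg) auto
      then show "logdet (X (Suc t)) \<le> logdet (X t)" using step2[OF Xall a[rule_format, of t]]
        unfolding fr_def by linarith
    qed
  qed
  moreover have "\<forall>Z r. Z \<in> carrier_mat m m \<longrightarrow> posdef m Z \<longrightarrow> strict_mono r \<longrightarrow>
            (\<forall>i<m. \<forall>j<m. (\<lambda>k. X (r k) $$ (i,j)) \<longlonglongrightarrow> Z $$ (i,j)) \<longrightarrow>
            (\<forall>D \<in> carrier_mat m m. Z + D \<in> feasible m n y \<longrightarrow> dir_deriv logdet Z D \<ge> 0)"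
  proof (intro allI impI ballI)
    fix Z r D
    assume Zc: "Z \<in> carrier_mat m m" and Zp: "posdef m Z" and rm: "strict_mono r"
      and conv: "\<forall>i<m. \<forall>j<m. (\<lambda>k. X (r k) $$ (i,j)) \<longlonglongrightarrow> Z $$ (i,j)"
      and Dc: "D \<in> carrier_mat m m" and ZD: "Z + D \<in> feasible m n y"
    define f where "f t = logdet (X t)" for t
    define Y where "Y = Z + D"
    have Y: "Y \<in> feasible m n y" unfolding Y_def using ZD .
    have Yc: "Y \<in> carrier_mat m m" using feas_carrier[OF Y] .
    have dZ: "det Z \<noteq> 0" using posdef_det_nz[OF Zp] .
    have Zi: "minv m Z \<in> carrier_mat m m" using minv_char(2)[OF Zc dZ] .
    have MX: "mlim m sequentially (\<lambda>k. X (r k)) Z" using conv unfolding mlim_def by blast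
    have MI: "mlim m sequentially (\<lambda>k. minv m (X (r k))) (minv m Z)"
      by (rule minv_tendsto[OF Xc Zc MX dZ])
    have Pc: "minv m (X t) \<in> carrier_mat m m" for t
      using minv_char(2)[OF Xc posdef_det_nz[OF Xp]] .
    have fl: "(\<lambda>k. f (r k)) \<longlonglongrightarrow> logdet Z"
      unfolding f_def logdet_def
      using posdef_det[OF Zp]
      by (intro tendsto_ln tendsto_Re det_tendsto[OF Xc Zc MX]) auto
    have fdec: "f (Suc t) \<le> f t" for t using dec unfolding f_def by blast
    have lb: "logdet Z \<le> f t" for t
    proof (rule LIMSEQ_le_const2[OF fl], intro exI[of _ t] allI impI)
      fix k assume "t \<le> k"
      then have "t \<le> r k" using seq_suble[OF rm, of k] by linarith
      then show "f (r k) \<le> f t" by (rule lift_Suc_antimono_le[of f, OF fdec])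
    qed
    define g where "g k = f (r k) - f (Suc (r k))" for k
    have g0: "g \<longlonglongrightarrow> 0"
    proof (rule tendsto_sandwich[of "\<lambda>k. 0" g sequentially "\<lambda>k. f (r k) - logdet Z"])
      show "\<forall>\<^sub>F k in sequentially. 0 \<le> g k" unfolding g_def using fdec by (simp add: algebra_simps)
      show "\<forall>\<^sub>F k in sequentially. g k \<le> f (r k) - logdet Z" unfolding g_def using lb by (simp add: algebra_simps)
      show "((\<lambda>k. 0) \<longlongrightarrow> 0) sequentially" by simp
      show "((\<lambda>k. f (r k) - logdet Z) \<longlongrightarrow> 0) sequentially"
        using tendsto_diff[OF fl tendsto_const[of "logdet Z"]] by simp
    qed
    have key: "Re (mtrace m (minv m Z * D)) \<ge> 0"
      using iter
    proof (elim disjE)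
      assume a: "\<forall>t. atom1_step m n y (X t) (X (Suc t))"
      have ineq: "- g k \<le> Re (mtrace m (minv m (X (r k)) * Y)) - real m" for k
        using step1[OF Xall a[rule_format] Y, of "r k"] unfolding g_def f_def by simp
      have lim: "(\<lambda>k. Re (mtrace m (minv m (X (r k)) * Y)) - real m) \<longlonglongrightarrow> Re (mtrace m (minv m Z * Y)) - real m"
        by (intro tendsto_diff tendsto_const tendsto_Re trace_tendsto[OF Pc Zi _ Yc MI mlim_const]) (rule Yc)
      have "- 0 \<le> Re (mtrace m (minv m Z * Y)) - real m"
        by (rule tendsto_le[OF _ lim tendsto_minus[OF g0]]) (use ineq in auto)
      moreover have "mtrace m (minv m Z * Y) = mtrace m (minv m Z * Z) + mtrace m (minv m Z * D)"
      proof -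
        have "(\<Sum>i<m. \<Sum>j<m. minv m Z $$ (i,j) * Y $$ (j,i))
            = (\<Sum>i<m. \<Sum>j<m. minv m Z $$ (i,j) * Z $$ (j,i) + minv m Z $$ (i,j) * D $$ (j,i))"
          by (intro sum.cong refl) (use Zc Dc in \<open>simp add: Y_def distrib_left\<close>)
        then show ?thesis using mtrace_mult[OF Zi Yc] mtrace_mult[OF Zi Zc] mtrace_mult[OF Zi Dc]
          by (simp add: sum.distrib)
      qed
      moreover have "mtrace m (minv m Z * Z) = of_nat m" by (rule mtrace_inv_self[OF Zp])
      ultimately show ?thesis by simp
    next
      assume a: "\<forall>t. atom2_step m n y (X t) (X (Suc t))"
      define d where "d k i j = X (Suc (r k)) $$ (i,j) - X (r k) $$ (i,j)" for k i j
      have d0: "(\<lambda>k. d k i j) \<longlonglongrightarrow> 0" if ij: "i < m" "j < m" for i j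
      proof -
        have "(\<lambda>k. (cmod (d k i j))^2) \<longlonglongrightarrow> 0"
        proof (rule tendsto_sandwich[of "\<lambda>k. 0" _ sequentially g])
          show "\<forall>\<^sub>F k in sequentially. 0 \<le> (cmod (d k i j))\<^sup>2" by simp
          show "\<forall>\<^sub>F k in sequentially. (cmod (d k i j))\<^sup>2 \<le> g k"
          proof (intro always_eventually allI)
            fix k
            have "(cmod (d k i j))^2 \<le> (\<Sum>i<m. \<Sum>j<m. (cmod (d k i j))^2)"
              by (rule entry_le_frob[OF ij])
            also have "\<dots> \<le> g k" using step2[OF Xall a[rule_format, of "r k"]]
              unfolding g_def f_def d_def by simp
            finally show "(cmod (d k i j))^2 \<le> g k" .
          qed
        qed (use g0 in auto)
        then have "(\<lambda>k. sqrt ((cmod (d k i j))^2)) \<longlonglongrightarrow> sqrt 0" by (rule tendsto_real_sqrt)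
        then have "(\<lambda>k. norm (d k i j)) \<longlonglongrightarrow> 0" by simp
        then show ?thesis by (simp add: tendsto_norm_zero_iff)
      qed
      have X1l: "(\<lambda>k. X (Suc (r k)) $$ (i,j)) \<longlonglongrightarrow> Z $$ (i,j)" if ij: "i < m" "j < m" for i j
      proof -
        have "(\<lambda>k. X (r k) $$ (i,j) + d k i j) \<longlonglongrightarrow> Z $$ (i,j) + 0"
          by (intro tendsto_add d0 ij) (use conv ij in auto)
        then show ?thesis unfolding d_def by simp
      qed
      define B where "B k = X (r k) - (1/2 :: complex) \<cdot>\<^sub>m minv m (X (r k))" for k
      have Bc: "B k \<in> carrier_mat m m" for k unfolding B_def by (intro minus_carrier_mat smult_carrier_mat Pc)
      have Bent: "B k $$ (i,j) = X (r k) $$ (i,j) - 1/2 * minv m (X (r k)) $$ (i,j)" if "i < m" "j < m" for k i j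
        unfolding B_def using that Xc[of "r k"] Pc[of "r k"] by simp
      have vi: "0 \<le> Re (\<Sum>i<m. \<Sum>j<m. cnj (X (Suc (r k)) $$ (i,j) - (X (r k) $$ (i,j) - 1/2 * minv m (X (r k)) $$ (i,j)))
                 * (Y $$ (i,j) - X (Suc (r k)) $$ (i,j)))" for k
      proof -
        have opt: "\<forall>W\<in>feasible m n y. frob2 m (X (Suc (r k)) - B k) \<le> frob2 m (W - B k)"
          using a[rule_format, of "r k"] unfolding atom2_step_def Let_def B_def by blast
        have "0 \<le> Re (\<Sum>i<m. \<Sum>j<m. cnj (X (Suc (r k)) $$ (i,j) - B k $$ (i,j)) * (Y $$ (i,j) - X (Suc (r k)) $$ (i,j)))"
          by (rule step2_vi[OF ydim Xall Y Bc opt])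
        also have "(\<Sum>i<m. \<Sum>j<m. cnj (X (Suc (r k)) $$ (i,j) - B k $$ (i,j)) * (Y $$ (i,j) - X (Suc (r k)) $$ (i,j)))
           = (\<Sum>i<m. \<Sum>j<m. cnj (X (Suc (r k)) $$ (i,j) - (X (r k) $$ (i,j) - 1/2 * minv m (X (r k)) $$ (i,j)))
                 * (Y $$ (i,j) - X (Suc (r k)) $$ (i,j)))"
          by (intro sum.cong refl) (simp add: Bent)
        finally show ?thesis .
      qed
      have lim: "(\<lambda>k. Re (\<Sum>i<m. \<Sum>j<m. cnj (X (Suc (r k)) $$ (i,j) - (X (r k) $$ (i,j) - 1/2 * minv m (X (r k)) $$ (i,j)))
                 * (Y $$ (i,j) - X (Suc (r k)) $$ (i,j))))
          \<longlonglongrightarrow> Re (\<Sum>i<m. \<Sum>j<m. cnj (Z $$ (i,j) - (Z $$ (i,j) - 1/2 * minv m Z $$ (i,j)))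
                 * (Y $$ (i,j) - Z $$ (i,j)))"
      proof (intro tendsto_Re tendsto_sum)
        fix i j assume ij: "i \<in> {..<m}" "j \<in> {..<m}"
        then have ij': "i < m" "j < m" by auto
        have c1: "(\<lambda>k. X (r k) $$ (i,j)) \<longlonglongrightarrow> Z $$ (i,j)" using conv ij' by blast
        have c2: "(\<lambda>k. minv m (X (r k)) $$ (i,j)) \<longlonglongrightarrow> minv m Z $$ (i,j)" using MI ij' unfolding mlim_def by blast
        show "(\<lambda>k. cnj (X (Suc (r k)) $$ (i,j) - (X (r k) $$ (i,j) - 1/2 * minv m (X (r k)) $$ (i,j)))
                 * (Y $$ (i,j) - X (Suc (r k)) $$ (i,j)))
          \<longlonglongrightarrow> cnj (Z $$ (i,j) - (Z $$ (i,j) - 1/2 * minv m Z $$ (i,j)))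
                 * (Y $$ (i,j) - Z $$ (i,j))"
          by (intro tendsto_mult tendsto_cnj tendsto_diff tendsto_const X1l[OF ij'] c1 c2)
      qed
      have "0 \<le> Re (\<Sum>i<m. \<Sum>j<m. cnj (Z $$ (i,j) - (Z $$ (i,j) - 1/2 * minv m Z $$ (i,j)))
                 * (Y $$ (i,j) - Z $$ (i,j)))"
        by (rule tendsto_le[OF _ lim tendsto_const]) (use vi in auto)
      also have "(\<Sum>i<m. \<Sum>j<m. cnj (Z $$ (i,j) - (Z $$ (i,j) - 1/2 * minv m Z $$ (i,j)))
                 * (Y $$ (i,j) - Z $$ (i,j))) = cnj (1/2 * mtrace m (minv m Z * D))"
      proof -
        have "(\<Sum>i<m. \<Sum>j<m. cnj (Z $$ (i,j) - (Z $$ (i,j) - 1/2 * minv m Z $$ (i,j)))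
                 * (Y $$ (i,j) - Z $$ (i,j))) = (\<Sum>i<m. \<Sum>j<m. cnj (1/2 * (minv m Z $$ (i,j) * D $$ (j,i))))"
        proof (intro sum.cong refl)
          fix i j assume ij: "i \<in> {..<m}" "j \<in> {..<m}"
          have hZ: "Z $$ (i,j) = cnj (Z $$ (j,i))" using Zp ij unfolding posdef_def herm_def by blast
          have hY: "Y $$ (i,j) = cnj (Y $$ (j,i))" using feas_herm_entry[OF Y] ij by blast
          have "Y $$ (i,j) - Z $$ (i,j) = cnj (D $$ (j,i))"
            using hZ hY ij Zc Dc unfolding Y_def by simp
          then show "cnj (Z $$ (i,j) - (Z $$ (i,j) - 1/2 * minv m Z $$ (i,j))) * (Y $$ (i,j) - Z $$ (i,j))
                = cnj (1/2 * (minv m Z $$ (i,j) * D $$ (j,i)))" by simp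
        qed
        also have "\<dots> = cnj (1/2 * mtrace m (minv m Z * D))"
          unfolding mtrace_mult[OF Zi Dc] by (simp add: cnj_sum sum_distrib_left)
        finally show ?thesis .
      qed
      finally show ?thesis by simp
    qed
    show "dir_deriv logdet Z D \<ge> 0" by (rule dd_lemma[OF Zp feas_posdef[OF ZD] Dc key])
  qed
  ultimately show ?thesis by blast
qed

end
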